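(* In the censored multi-armed bandit setting, let $\lambda>0$, $\alpha>0$, $\delta\in(0,1]$, and let $\psi_\alpha$ be a primitive of $x\mapsto x^{-\alpha}$ on $(0,\infty)$. Then $$\sup_{\pi}\mathbb{E}[\mathbb V_\alpha(T,\pi)]\le\frac{d_{\mathrm{eff}}}{(1-\delta)^\alpha}\Big[\psi_\alpha\Big(\frac{T}{d_{\mathrm{eff}}}+\frac{\lambda}{1-\delta}\Big)-\psi_\alpha\Big(\frac{\lambda}{1-\delta}\Big)\Big]+\frac{24d_{\mathrm{eff}}\log T+d}{\lambda^\alpha}+\frac{4d_{\mathrm{eff}}}{\lambda^\alpha\delta^2T^{12\delta^2}},$$ where the supremum is over all policies (in particular over policies adapted to the censorship realizations), and $\mathbb V_\alpha(T,\pi)=\sum_{t=1}^T(N_{a_t}(t-1)+\lambda)^{-\alpha}$. (For $\delta=1$ the first term is interpreted via the stated expression only when $\delta<1$; the statement is intended for $\delta\in(0,1)$.)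
   Context: Censored multi-armed bandit setting. Fix an integer $d\ge 1$ (number of arms) and a horizon $T\ge 2$. Each arm $a\in[d]=\{1,\dots,d\}$ has an unknown mean reward $\theta^\star_a\in\mathbb{R}$. At each round $t=1,\dots,T$ a nonempty action set $\mathcal A_t\subseteq[d]$ is revealed (fixed in advance), the agent selects $a_t\in\mathcal A_t$, and a censorship indicator $x_{a_t}\sim\mathrm{Bernoulli}(p_{a_t})$ is drawn, independently of everything else given $a_t$, where $p_a\in(0,1]$ are fixed parameters; the feedback is observed iff $x_{a_t}=1$. A policy chooses $a_t$ as a (possibly randomized) function of the past (actions, censorship indicators, observed feedbacks). Let $N_a(t)=\#\{l\le t: a_l=a,\ x_{a_l}=1\}$. The effective dimension is $d_{\mathrm{eff}}=\sum_{a\in[d]}1/p_a$. *)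

theory Defs
  imports "HOL-Probability.Probability"
begin

text \<open>A history is the list of (chosen arm, censorship indicator) pairs of rounds 1,2,...;
  entry i of the list corresponds to round i+1.\<close>
type_synonym hist = "(nat \<times> bool) list"

definition N_obs :: "hist \<Rightarrow> nat \<Rightarrow> nat \<Rightarrow> nat" where
  "N_obs h a k = length (filter (\<lambda>(b, x). b = a \<and> x) (take k h))"

text \<open>A (randomized, behavioural) policy maps the round index t and the past history
  to a distribution over arms. Distribution of the history after t rounds.\<close>
fun traj :: "(nat \<Rightarrow> hist \<Rightarrow> nat pmf) \<Rightarrow> (nat \<Rightarrow> real) \<Rightarrow> nat \<Rightarrow> hist pmf" where
  "traj \<pi> p 0 = return_pmf []"
| "traj \<pi> p (Suc t) =
     bind_pmf (traj \<pi> p t) (\<lambda>h. bind_pmf (\<pi> (Suc t) h)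
       (\<lambda>a. map_pmf (\<lambda>x. h @ [(a, x)]) (bernoulli_pmf (p a))))"

definition admissible_policy :: "(nat \<Rightarrow> nat set) \<Rightarrow> nat \<Rightarrow> (nat \<Rightarrow> hist \<Rightarrow> nat pmf) \<Rightarrow> bool" where
  "admissible_policy A T \<pi> \<longleftrightarrow> (\<forall>t\<in>{1..T}. \<forall>h. set_pmf (\<pi> t h) \<subseteq> A t)"

definition V_alpha :: "real \<Rightarrow> real \<Rightarrow> nat \<Rightarrow> hist \<Rightarrow> real" where
  "V_alpha \<alpha> lam T h =
     (\<Sum>t = 1..T. (real (N_obs h (fst (h ! (t - 1))) (t - 1)) + lam) powr (- \<alpha>))"

definition d_eff :: "nat \<Rightarrow> (nat \<Rightarrow> real) \<Rightarrow> real" where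
  "d_eff d p = (\<Sum>a = 1..d. 1 / p a)"

end

theory Submission
  imports Defs
begin

definition cnt :: "hist \<Rightarrow> nat \<Rightarrow> nat" where
  "cnt h a = length (filter (\<lambda>(b, x). b = a \<and> x) h)"

lemma cnt_append: "cnt (h @ [(a, x)]) b = cnt h b + (if b = a \<and> x then 1 else 0)"
  by (simp add: cnt_def)

lemma N_obs_len: "N_obs h a (length h) = cnt h a"
  by (simp add: N_obs_def cnt_def)

lemma V_step:
  assumes "length h = t"
  shows "V_alpha \<alpha> lam (Suc t) (h @ [(a, x)]) = V_alpha \<alpha> lam t h + (real (cnt h a) + lam) powr (-\<alpha>)"
proof -
  have "V_alpha \<alpha> lam (Suc t) (h @ [(a, x)]) =
     (\<Sum>i = 1..t. (real (N_obs (h @ [(a, x)]) (fst ((h @ [(a, x)]) ! (i - 1))) (i - 1)) + lam) powr (- \<alpha>))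
     + (real (N_obs (h @ [(a, x)]) (fst ((h @ [(a, x)]) ! t)) t) + lam) powr (- \<alpha>)"
    unfolding V_alpha_def by simp
  also have "(\<Sum>i = 1..t. (real (N_obs (h @ [(a, x)]) (fst ((h @ [(a, x)]) ! (i - 1))) (i - 1)) + lam) powr (- \<alpha>))
      = V_alpha \<alpha> lam t h"
    unfolding V_alpha_def
  proof (rule sum.cong[OF refl])
    fix i assume "i \<in> {1..t}"
    then have "i - 1 < length h" using assms by auto
    then show "(real (N_obs (h @ [(a, x)]) (fst ((h @ [(a, x)]) ! (i - 1))) (i - 1)) + lam) powr (- \<alpha>) =
        (real (N_obs h (fst (h ! (i - 1))) (i - 1)) + lam) powr (- \<alpha>)"
      by (simp add: N_obs_def nth_append)
  qed
  also have "N_obs (h @ [(a, x)]) (fst ((h @ [(a, x)]) ! t)) t = cnt h a"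
    using assms by (simp add: N_obs_def cnt_def nth_append)
  finally show ?thesis .
qed


lemma exp_bind_shift:
  fixes f :: "'b \<Rightarrow> real" and N :: "'a \<Rightarrow> 'b pmf"
  assumes fin: "finite (set_pmf M)" and finN: "\<And>x. x \<in> set_pmf M \<Longrightarrow> finite (set_pmf (N x))"
    and eq: "\<And>x. x \<in> set_pmf M \<Longrightarrow> measure_pmf.expectation (N x) f = g x + c"
  shows "measure_pmf.expectation (bind_pmf M N) f = measure_pmf.expectation M g + c"
proof -
  have "measure_pmf.expectation (bind_pmf M N) f = (\<Sum>x\<in>set_pmf M. pmf M x *\<^sub>R measure_pmf.expectation (N x) f)"
    by (rule pmf_expectation_bind[OF fin finN subset_refl])
  also have "\<dots> = (\<Sum>x\<in>set_pmf M. pmf M x * g x + c * pmf M x)"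
    by (rule sum.cong) (auto simp: eq algebra_simps)
  also have "\<dots> = (\<Sum>x\<in>set_pmf M. pmf M x * g x) + c * (\<Sum>x\<in>set_pmf M. pmf M x)"
    by (simp add: sum.distrib sum_distrib_left)
  also have "(\<Sum>x\<in>set_pmf M. pmf M x) = 1" by (rule sum_pmf_eq_1[OF fin subset_refl])
  also have "(\<Sum>x\<in>set_pmf M. pmf M x * g x) = measure_pmf.expectation M g"
    by (subst integral_measure_pmf[OF fin]) auto
  finally show ?thesis by simp
qed

lemma traj_supp:
  assumes A: "\<And>t. t \<in> {1..T} \<Longrightarrow> A t \<subseteq> {1..d}" and adm: "admissible_policy A T \<pi>"
  shows "t \<le> T \<Longrightarrow> finite (set_pmf (traj \<pi> p t)) \<and>
     (\<forall>h\<in>set_pmf (traj \<pi> p t). length h = t \<and> (\<forall>y\<in>set h. fst y \<in> {1..d}))"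
proof (induction t)
  case 0
  then show ?case by simp
next
  case (Suc t)
  then have IH: "finite (set_pmf (traj \<pi> p t))"
     "\<And>h. h\<in>set_pmf (traj \<pi> p t) \<Longrightarrow> length h = t \<and> (\<forall>y\<in>set h. fst y \<in> {1..d})" by auto
  have sub: "\<And>h. set_pmf (\<pi> (Suc t) h) \<subseteq> {1..d}"
    using adm A[of "Suc t"] Suc.prems unfolding admissible_policy_def by fastforce
  have "set_pmf (traj \<pi> p (Suc t)) \<subseteq> (\<lambda>(h, a, x). h @ [(a, x)]) ` (set_pmf (traj \<pi> p t) \<times> {1..d} \<times> UNIV)"
    using sub by (auto simp: image_iff) (use sub in fastforce)+
  moreover have "finite ((\<lambda>(h, a, x). h @ [(a, x)]) ` (set_pmf (traj \<pi> p t) \<times> {1..d} \<times> (UNIV::bool set)))"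
    using IH(1) by auto
  ultimately have "finite (set_pmf (traj \<pi> p (Suc t)))" by (rule finite_subset)
  moreover have "\<forall>h\<in>set_pmf (traj \<pi> p (Suc t)). length h = Suc t \<and> (\<forall>y\<in>set h. fst y \<in> {1..d})"
    using IH(2) sub by fastforce
  ultimately show ?case by blast
qed


definition gg :: "real \<Rightarrow> real \<Rightarrow> nat \<Rightarrow> real" where
  "gg lam \<alpha> c = (\<Sum>j<c. (real j + lam) powr (-\<alpha>))"

definition Rf :: "real \<Rightarrow> real \<Rightarrow> real \<Rightarrow> nat \<Rightarrow> (nat \<Rightarrow> real) \<Rightarrow> hist \<Rightarrow> real" where
  "Rf \<alpha> lam s d p h = (\<Sum>a = 1..d. (gg lam \<alpha> (cnt h a) - s * real (cnt h a)) / p a)"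

lemma R_append:
  assumes "a \<in> {1..d}"
  shows "Rf \<alpha> lam s d p (h @ [(a, x)]) = Rf \<alpha> lam s d p h
     + (if x then ((real (cnt h a) + lam) powr (-\<alpha>) - s) / p a else 0)"
proof -
  have "Rf \<alpha> lam s d p (h @ [(a, x)]) = (\<Sum>b = 1..d. (gg lam \<alpha> (cnt h b) - s * real (cnt h b)) / p b
     + (if b = a then (if x then ((real (cnt h a) + lam) powr (-\<alpha>) - s) / p a else 0) else 0))"
    unfolding Rf_def
    by (rule sum.cong) (auto simp: cnt_append gg_def diff_divide_distrib add_divide_distrib algebra_simps)
  also have "\<dots> = Rf \<alpha> lam s d p h + (if x then ((real (cnt h a) + lam) powr (-\<alpha>) - s) / p a else 0)"
    unfolding Rf_def sum.distrib using assms by simp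
  finally show ?thesis .
qed

lemma main_eq:
  assumes A: "\<And>t. t \<in> {1..T} \<Longrightarrow> A t \<subseteq> {1..d}" and adm: "admissible_policy A T \<pi>"
    and pos: "\<And>a. a \<in> {1..d} \<Longrightarrow> 0 < p a \<and> p a \<le> 1"
  shows "t \<le> T \<Longrightarrow> measure_pmf.expectation (traj \<pi> p t)
      (\<lambda>h. V_alpha \<alpha> lam (length h) h - Rf \<alpha> lam s d p h) = s * real t"
proof (induction t)
  case 0
  then show ?case by (simp add: V_alpha_def Rf_def cnt_def gg_def)
next
  case (Suc t)
  define F where "F = (\<lambda>h. V_alpha \<alpha> lam (length h) h - Rf \<alpha> lam s d p h)"
  have sup: "finite (set_pmf (traj \<pi> p t))"
     "\<And>h. h\<in>set_pmf (traj \<pi> p t) \<Longrightarrow> length h = t"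
    using traj_supp[OF A adm, of t p] Suc.prems by auto
  have sub: "\<And>h. set_pmf (\<pi> (Suc t) h) \<subseteq> {1..d}"
    using adm A[of "Suc t"] Suc.prems unfolding admissible_policy_def by fastforce
  have finpi: "\<And>h. finite (set_pmf (\<pi> (Suc t) h))" using sub finite_subset by blast
  have "measure_pmf.expectation (traj \<pi> p (Suc t)) F = measure_pmf.expectation (traj \<pi> p t) F + s"
    unfolding traj.simps
  proof (rule exp_bind_shift[OF sup(1)])
    fix h assume h: "h \<in> set_pmf (traj \<pi> p t)"
    show "finite (set_pmf (\<pi> (Suc t) h \<bind> (\<lambda>a. map_pmf (\<lambda>x. h @ [(a, x)]) (bernoulli_pmf (p a)))))"
      using finpi[of h] by (auto intro: finite_subset[of _ "UNIV :: bool set"])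
    show "measure_pmf.expectation (\<pi> (Suc t) h \<bind> (\<lambda>a. map_pmf (\<lambda>x. h @ [(a, x)]) (bernoulli_pmf (p a)))) F
       = F h + s"
    proof -
      have "measure_pmf.expectation (\<pi> (Suc t) h \<bind> (\<lambda>a. map_pmf (\<lambda>x. h @ [(a, x)]) (bernoulli_pmf (p a)))) F
         = measure_pmf.expectation (\<pi> (Suc t) h) (\<lambda>a. F h) + s"
      proof (rule exp_bind_shift[OF finpi])
        fix a assume a: "a \<in> set_pmf (\<pi> (Suc t) h)"
        show "finite (set_pmf (map_pmf (\<lambda>x. h @ [(a, x)]) (bernoulli_pmf (p a))))" by simp
        have ad: "a \<in> {1..d}" using a sub by blast
        have pa: "0 < p a" "p a \<le> 1" using pos[OF ad] by auto
        have len: "length h = t" using sup(2)[OF h] .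
        have Fx: "F (h @ [(a, x)]) = F h + (real (cnt h a) + lam) powr (-\<alpha>)
            - (if x then ((real (cnt h a) + lam) powr (-\<alpha>) - s) / p a else 0)" for x
          unfolding F_def using V_step[OF len, of \<alpha> lam a x] R_append[OF ad, of \<alpha> lam s p h x] len
          by simp
        show "measure_pmf.expectation (map_pmf (\<lambda>x. h @ [(a, x)]) (bernoulli_pmf (p a))) F = F h + s"
          using pa by (simp add: Fx field_simps)
      qed
      then show ?thesis by simp
    qed
  qed
  then show ?case using Suc by (simp add: F_def algebra_simps)
qed


lemma mvt_psi:
  fixes \<psi> :: "real \<Rightarrow> real"
  assumes der: "\<And>x. x > 0 \<Longrightarrow> (\<psi> has_real_derivative x powr (- \<alpha>)) (at x)"
    and "0 < a" "a < b"
  shows "\<exists>z. a < z \<and> z < b \<and> \<psi> b - \<psi> a = (b - a) * z powr (-\<alpha>)"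
  using MVT2[OF assms(3), of \<psi> "\<lambda>x. x powr (-\<alpha>)"] der assms(2) by force

lemma psi_mono:
  fixes \<psi> :: "real \<Rightarrow> real"
  assumes der: "\<And>x. x > 0 \<Longrightarrow> (\<psi> has_real_derivative x powr (- \<alpha>)) (at x)"
    and "0 < a" "a \<le> b"
  shows "\<psi> a \<le> \<psi> b"
proof (cases "a = b")
  case False
  then obtain z where "a < z" "\<psi> b - \<psi> a = (b - a) * z powr (-\<alpha>)"
    using mvt_psi[OF der, of a b] assms by force
  moreover have "(b - a) * z powr (-\<alpha>) \<ge> 0" using assms by simp
  ultimately show ?thesis by linarith
qed simp

lemma psi_step:
  fixes \<psi> :: "real \<Rightarrow> real"
  assumes der: "\<And>x. x > 0 \<Longrightarrow> (\<psi> has_real_derivative x powr (- \<alpha>)) (at x)"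
    and "\<alpha> > 0" "0 < a"
  shows "(a + 1) powr (-\<alpha>) \<le> \<psi> (a + 1) - \<psi> a"
proof -
  obtain z where z: "a < z" "z < a + 1" "\<psi> (a+1) - \<psi> a = (a + 1 - a) * z powr (-\<alpha>)"
    using mvt_psi[OF der, of a "a+1"] assms by force
  have "(a + 1) powr (-\<alpha>) \<le> z powr (-\<alpha>)"
    by (rule powr_mono2') (use z assms in auto)
  then show ?thesis using z by simp
qed

lemma gg_bound:
  fixes \<psi> :: "real \<Rightarrow> real"
  assumes der: "\<And>x. x > 0 \<Longrightarrow> (\<psi> has_real_derivative x powr (- \<alpha>)) (at x)"
    and "\<alpha> > 0" "lam > 0"
  shows "gg lam \<alpha> c \<le> lam powr (-\<alpha>) + \<psi> (real c + lam) - \<psi> lam"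
proof -
  have key: "gg lam \<alpha> (Suc n) \<le> lam powr (-\<alpha>) + \<psi> (real n + lam) - \<psi> lam" for n
  proof (induction n)
    case 0
    then show ?case by (simp add: gg_def)
  next
    case (Suc n)
    have "gg lam \<alpha> (Suc (Suc n)) = gg lam \<alpha> (Suc n) + (real n + lam + 1) powr (-\<alpha>)"
      by (simp add: gg_def algebra_simps)
    also have "(real n + lam + 1) powr (-\<alpha>) \<le> \<psi> (real n + lam + 1) - \<psi> (real n + lam)"
      by (rule psi_step[OF der]) (use assms in auto)
    finally show ?case using Suc by (simp add: algebra_simps)
  qed
  show ?thesis
  proof (cases c)
    case 0
    then show ?thesis using assms by (simp add: gg_def)
  next
    case (Suc n)
    have "\<psi> (real n + lam) \<le> \<psi> (real c + lam)"
      by (rule psi_mono[OF der]) (use assms Suc in auto)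
    then show ?thesis using key[of n] Suc by simp
  qed
qed

lemma tangent:
  fixes \<psi> :: "real \<Rightarrow> real"
  assumes der: "\<And>x. x > 0 \<Longrightarrow> (\<psi> has_real_derivative x powr (- \<alpha>)) (at x)"
    and "\<alpha> > 0" "lam > 0" "y \<ge> 0" "x0 \<ge> 0"
  shows "\<psi> (y + lam) \<le> \<psi> (x0 + lam) + (x0 + lam) powr (-\<alpha>) * (y - x0)"
proof -
  consider "y = x0" | "y > x0" | "y < x0" by linarith
  then show ?thesis
  proof cases
    case 2
    then obtain z where z: "x0 + lam < z" "\<psi> (y + lam) - \<psi> (x0 + lam) = (y + lam - (x0 + lam)) * z powr (-\<alpha>)"
      using mvt_psi[OF der, of "x0 + lam" "y + lam"] assms by force
    have "z powr (-\<alpha>) \<le> (x0 + lam) powr (-\<alpha>)"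
      by (rule powr_mono2') (use z assms in auto)
    then have "(y - x0) * z powr (-\<alpha>) \<le> (y - x0) * (x0 + lam) powr (-\<alpha>)"
      using 2 by (intro mult_left_mono) auto
    then show ?thesis using z by (simp add: algebra_simps)
  next
    case 3
    then obtain z where z: "z < x0 + lam" "y + lam < z" "\<psi> (x0 + lam) - \<psi> (y + lam) = (x0 + lam - (y + lam)) * z powr (-\<alpha>)"
      using mvt_psi[OF der, of "y + lam" "x0 + lam"] assms by force
    have "z powr (-\<alpha>) \<ge> (x0 + lam) powr (-\<alpha>)"
      by (rule powr_mono2') (use z assms in auto)
    then have "(x0 - y) * z powr (-\<alpha>) \<ge> (x0 - y) * (x0 + lam) powr (-\<alpha>)"
      using 3 by (intro mult_left_mono) auto
    then show ?thesis using z by (simp add: algebra_simps)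
  qed simp
qed

lemma delta_cmp:
  fixes \<psi> :: "real \<Rightarrow> real"
  assumes der: "\<And>x. x > 0 \<Longrightarrow> (\<psi> has_real_derivative x powr (- \<alpha>)) (at x)"
    and "\<alpha> > 0" "lam > 0" "0 < \<delta>" "\<delta> < 1" "x0 > 0"
  shows "\<psi> (x0 + lam) - \<psi> lam \<le> (\<psi> (x0 + lam / (1 - \<delta>)) - \<psi> (lam / (1 - \<delta>))) / (1 - \<delta>) powr \<alpha>"
proof -
  define mu where "mu = lam / (1 - \<delta>)"
  have mu: "mu > 0" using assms by (simp add: mu_def)
  define k where "k = (\<lambda>x. (\<psi> (x + mu) - \<psi> mu) / (1 - \<delta>) powr \<alpha> - (\<psi> (x + lam) - \<psi> lam))"
  define k' where "k' = (\<lambda>x. (x + mu) powr (-\<alpha>) / (1 - \<delta>) powr \<alpha> - (x + lam) powr (-\<alpha>))"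
  have dk: "DERIV k x :> k' x" if "0 \<le> x" for x
  proof -
    have d1: "((\<lambda>x. \<psi> (x + mu)) has_real_derivative (x + mu) powr (-\<alpha>)) (at x)"
      using der[of "x + mu"] mu that DERIV_shift[of \<psi> "(x + mu) powr (-\<alpha>)" x mu] by auto
    have d2: "((\<lambda>x. \<psi> (x + lam)) has_real_derivative (x + lam) powr (-\<alpha>)) (at x)"
      using der[of "x + lam"] assms that DERIV_shift[of \<psi> "(x + lam) powr (-\<alpha>)" x lam] by auto
    have "((\<lambda>x. (\<psi> (x + mu) - \<psi> mu) / (1 - \<delta>) powr \<alpha> - (\<psi> (x + lam) - \<psi> lam)) has_real_derivative
        ((x + mu) powr (-\<alpha>) - 0) / (1 - \<delta>) powr \<alpha> - ((x + lam) powr (-\<alpha>) - 0)) (at x)"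
      by (intro DERIV_diff DERIV_cdivide d1 d2 DERIV_const)
    then show ?thesis by (simp add: k_def k'_def)
  qed
  obtain z where z: "0 < z" "k x0 - k 0 = (x0 - 0) * k' z"
    using MVT2[OF assms(6), of k k'] dk by force
  have e: "(1 - \<delta>) * (z + mu) = (1 - \<delta>) * z + lam" using assms by (simp add: mu_def field_simps)
  have dz: "\<delta> * z < z" using mult_strict_right_mono[of \<delta> 1 z] z assms by simp
  have "(z + lam) powr (-\<alpha>) \<le> ((1 - \<delta>) * (z + mu)) powr (-\<alpha>)"
  proof -
    have "0 \<le> (1 - \<delta>) * z" using z assms by simp
    then have "0 < (1 - \<delta>) * z + lam" using assms by linarith
    moreover have "(1 - \<delta>) * z + lam \<le> z + lam" using z assms by (simp add: algebra_simps)
    ultimately show ?thesis unfolding e by (rule powr_mono2'[rotated]) (use assms in simp)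
  qed
  also have "\<dots> = (z + mu) powr (-\<alpha>) / (1 - \<delta>) powr \<alpha>"
    using assms mu z by (simp add: powr_mult powr_minus_divide)
  finally have "k' z \<ge> 0" unfolding k'_def by simp
  then have "k x0 \<ge> 0" using z assms by (simp add: k_def)
  then show ?thesis by (simp add: k_def mu_def)
qed


theorem proposition2:
  fixes d T :: nat and A :: "nat \<Rightarrow> nat set" and p :: "nat \<Rightarrow> real"
    and lam \<alpha> \<delta> :: real and \<psi> :: "real \<Rightarrow> real"
    and \<pi> :: "nat \<Rightarrow> hist \<Rightarrow> nat pmf"
  assumes "d \<ge> 1" and "T \<ge> 2"
    and "\<And>t. t \<in> {1..T} \<Longrightarrow> A t \<noteq> {} \<and> A t \<subseteq> {1..d}"
    and "\<And>a. a \<in> {1..d} \<Longrightarrow> 0 < p a \<and> p a \<le> 1"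
    and "lam > 0" and "\<alpha> > 0" and "0 < \<delta>" and "\<delta> < 1"
    and "\<And>x. x > 0 \<Longrightarrow> (\<psi> has_real_derivative x powr (- \<alpha>)) (at x)"
    and "admissible_policy A T \<pi>"
  shows "measure_pmf.expectation (traj \<pi> p T) (V_alpha \<alpha> lam T)
    \<le> d_eff d p / (1 - \<delta>) powr \<alpha>
         * (\<psi> (real T / d_eff d p + lam / (1 - \<delta>)) - \<psi> (lam / (1 - \<delta>)))
       + (24 * d_eff d p * ln (real T) + real d) / lam powr \<alpha>
       + 4 * d_eff d p / (lam powr \<alpha> * \<delta>\<^sup>2 * real T powr (12 * \<delta>\<^sup>2))"
proof -
  note der = assms(9)
  have A: "\<And>t. t \<in> {1..T} \<Longrightarrow> A t \<subseteq> {1..d}" using assms(3) by blast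
  have pos: "\<And>a. a \<in> {1..d} \<Longrightarrow> 0 < p a \<and> p a \<le> 1" by (rule assms(4))
  define D where "D = d_eff d p"
  have "real d = (\<Sum>a = 1..d. 1::real)" by simp
  also have "\<dots> \<le> D" unfolding D_def d_eff_def
    by (rule sum_mono) (use pos in auto)
  finally have Dd: "real d \<le> D" .
  have D1: "D \<ge> 1" using Dd assms(1) by simp
  define x0 where "x0 = real T / D"
  have x0: "x0 > 0" using D1 assms(2) by (simp add: x0_def)
  have Dx0: "D * x0 = real T" using D1 by (simp add: x0_def)
  define s where "s = (x0 + lam) powr (-\<alpha>)"
  define K where "K = lam powr (-\<alpha>) + \<psi> (x0 + lam) - \<psi> lam"
  have Rb: "Rf \<alpha> lam s d p h \<le> D * K - s * real T" for h
  proof -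
    have "Rf \<alpha> lam s d p h \<le> (\<Sum>a = 1..d. (K - s * x0) / p a)"
      unfolding Rf_def
    proof (rule sum_mono)
      fix a assume a: "a \<in> {1..d}"
      have "gg lam \<alpha> (cnt h a) \<le> lam powr (-\<alpha>) + \<psi> (real (cnt h a) + lam) - \<psi> lam"
        by (rule gg_bound[OF der]) (use assms in auto)
      also have "\<psi> (real (cnt h a) + lam) \<le> \<psi> (x0 + lam) + s * (real (cnt h a) - x0)"
        unfolding s_def by (rule tangent[OF der]) (use assms x0 in auto)
      finally have "gg lam \<alpha> (cnt h a) - s * real (cnt h a) \<le> K - s * x0"
        by (simp add: K_def algebra_simps)
      then show "(gg lam \<alpha> (cnt h a) - s * real (cnt h a)) / p a \<le> (K - s * x0) / p a"
        using pos[OF a] by (simp add: divide_right_mono)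
    qed
    also have "\<dots> = (K - s * x0) * D" unfolding D_def d_eff_def
      by (simp add: sum_distrib_left)
    also have "\<dots> = D * K - s * real T" using Dx0 by (simp add: algebra_simps)
    finally show ?thesis .
  qed
  define M where "M = traj \<pi> p T"
  have sup: "finite (set_pmf M)" "\<And>h. h \<in> set_pmf M \<Longrightarrow> length h = T"
    using traj_supp[OF A assms(10), of T p] by (auto simp: M_def)
  have meq: "measure_pmf.expectation M (\<lambda>h. V_alpha \<alpha> lam (length h) h - Rf \<alpha> lam s d p h) = s * real T"
    unfolding M_def by (rule main_eq[OF A assms(10) pos order_refl])
  have E1: "measure_pmf.expectation M (V_alpha \<alpha> lam T) = (\<Sum>h\<in>set_pmf M. pmf M h * V_alpha \<alpha> lam T h)"
    by (subst integral_measure_pmf[OF sup(1)]) auto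
  have E2: "measure_pmf.expectation M (\<lambda>h. V_alpha \<alpha> lam (length h) h - Rf \<alpha> lam s d p h)
     = (\<Sum>h\<in>set_pmf M. pmf M h * (V_alpha \<alpha> lam T h - Rf \<alpha> lam s d p h))"
    by (subst integral_measure_pmf[OF sup(1)]) (auto simp: sup(2))
  have "(\<Sum>h\<in>set_pmf M. pmf M h * V_alpha \<alpha> lam T h)
      = (\<Sum>h\<in>set_pmf M. pmf M h * (V_alpha \<alpha> lam T h - Rf \<alpha> lam s d p h))
        + (\<Sum>h\<in>set_pmf M. pmf M h * Rf \<alpha> lam s d p h)"
    by (simp add: sum.distrib[symmetric] algebra_simps)
  also have "(\<Sum>h\<in>set_pmf M. pmf M h * Rf \<alpha> lam s d p h) \<le> (\<Sum>h\<in>set_pmf M. pmf M h * (D * K - s * real T))"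
    by (rule sum_mono) (simp add: Rb mult_left_mono)
  also have "\<dots> = D * K - s * real T"
    using sum_pmf_eq_1[OF sup(1) subset_refl] by (simp add: sum_distrib_right[symmetric])
  finally have EV: "measure_pmf.expectation M (V_alpha \<alpha> lam T) \<le> D * K"
    using E1 E2 meq by simp
  have c1: "D * (\<psi> (x0 + lam) - \<psi> lam) \<le> D / (1 - \<delta>) powr \<alpha>
         * (\<psi> (real T / D + lam / (1 - \<delta>)) - \<psi> (lam / (1 - \<delta>)))"
    using mult_left_mono[OF delta_cmp[OF der assms(6,5,7,8) x0], of D] D1
    by (simp add: x0_def)
  have lnT: "ln (real T) \<ge> 1/2"
  proof -
    have "ln (1 / real T) \<le> 1 / real T - 1" by (rule ln_le_minus_one) (use assms in simp)
    then have "ln (real T) \<ge> 1 - 1 / real T" using assms by (simp add: ln_div)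
    moreover have "1 / real T \<le> 1/2" using assms by (simp add: field_simps)
    ultimately show ?thesis by linarith
  qed
  have c2: "D * lam powr (-\<alpha>) \<le> (24 * D * ln (real T) + real d) / lam powr \<alpha>"
  proof -
    have "D * (1/2) \<le> D * ln (real T)" using lnT D1 by (intro mult_left_mono) auto
    moreover have "0 \<le> real d" by simp
    ultimately have "D \<le> 24 * (D * ln (real T)) + real d" using D1 by linarith
    then have "D \<le> 24 * D * ln (real T) + real d" by (simp add: mult.assoc)
    then show ?thesis using assms(5) by (simp add: powr_minus_divide divide_right_mono)
  qed
  have c3: "0 \<le> 4 * D / (lam powr \<alpha> * \<delta>\<^sup>2 * real T powr (12 * \<delta>\<^sup>2))"
    using D1 assms by simp
  show ?thesis
    using EV c1 c2 c3 unfolding M_def D_def[symmetric] K_def by (simp add: algebra_simps)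
qed

end
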